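(* Let $M,N$ be complete pointed metric spaces and $f\colon M\to N$ a Lipschitz map with $f(0_M)=0_N$. Let $(x_n,y_n)_n$ be a sequence in $M\times M$ with $x_n\neq y_n$ for all $n$, and put $$m_n=\frac{\delta(f(x_n))-\delta(f(y_n))}{d(x_n,y_n)}\in\mathcal F(N).$$ Assume that $(m_n)_n$ converges weakly to some $\gamma\in\mathcal F(N)$. Then: (1) if $d(x_n,y_n)\to0$, then $\gamma=0$; (2) if $d(x_n,y_n)\to+\infty$, then $\gamma=0$; (3) if there exists $\alpha>0$ with $d(x_n,y_n)\ge\alpha$ for all $n$, and $\gamma\neq0$, then the sequence $(d(x_n,y_n))_n$ is bounded and $(f(x_n),f(y_n))_n$ has an accumulation point in $N\times N$.
   Context: Scalars are $\mathbb K=\mathbb R$ or $\mathbb C$. For a pointed metric space $(M,d,0_M)$, $\mathrm{Lip}_0(M)$ denotes the Banach space of Lipschitz functions $g\colon M\to\mathbb K$ with $g(0_M)=0$ normed by the best Lipschitz constant; $\delta(x)\in\mathrm{Lip}_0(M)^*$ is evaluation at $x$; the Lipschitz-free space $\mathcal F(M)$ is the norm-closed linear span of $\{\delta(x):x\in M\}$ in $\mathrm{Lip}_0(M)^*$, with dual $\mathrm{Lip}_0(M)$ (weak convergence in $\mathcal F(N)$ is with respect to this duality). *)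

theory Defs
  imports "HOL-Analysis.Analysis"
begin

text \<open>Lip_0(N) for a pointed metric space (N, dist, z) with scalars 'k
  (R or C; any real normed field is one of these).\<close>
definition Lip0 :: "'b::metric_space \<Rightarrow> ('b \<Rightarrow> 'k::real_normed_field) set" where
  "Lip0 z = {g. (\<exists>L. L-lipschitz_on UNIV g) \<and> g z = 0}"

definition delta :: "'b \<Rightarrow> ('b \<Rightarrow> 'k) \<Rightarrow> 'k" where
  "delta x = (\<lambda>g. g x)"

text \<open>Dual-norm bound: the functional phi has norm at most e on Lip_0(N),
  i.e. |phi g| \<le> e * L for every Lipschitz constant L of g (equivalently
  |phi g| \<le> e * Lip(g), since the best Lipschitz constant is attained).\<close>
definition dual_norm_le :: "'b::metric_space \<Rightarrow> (('b \<Rightarrow> 'k::real_normed_field) \<Rightarrow> 'k) \<Rightarrow> real \<Rightarrow> bool" where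
  "dual_norm_le z phi e \<longleftrightarrow>
     (\<forall>g\<in>Lip0 z. \<forall>L. L-lipschitz_on UNIV g \<longrightarrow> norm (phi g) \<le> e * L)"

definition span_deltas :: "(('b \<Rightarrow> 'k::real_normed_field) \<Rightarrow> 'k) set" where
  "span_deltas = {phi. \<exists>S c. finite S \<and> phi = (\<lambda>g. \<Sum>x\<in>S. c x * delta x g)}"

text \<open>The Lipschitz-free space F(N): norm-closure (in Lip_0(N)^*) of the span of
  the deltas.  Functionals are only meaningful on Lip_0(N).\<close>
definition free_space :: "'b::metric_space \<Rightarrow> (('b \<Rightarrow> 'k::real_normed_field) \<Rightarrow> 'k) set" where
  "free_space z = {gamma. \<exists>phi::nat \<Rightarrow> (('b \<Rightarrow> 'k) \<Rightarrow> 'k).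
      (\<forall>k. phi k \<in> span_deltas) \<and>
      (\<forall>e>0. \<exists>K. \<forall>k\<ge>K. dual_norm_le z (\<lambda>g. phi k g - gamma g) e)}"

definition weak_conv :: "'b::metric_space \<Rightarrow> (nat \<Rightarrow> ('b \<Rightarrow> 'k::real_normed_field) \<Rightarrow> 'k)
    \<Rightarrow> (('b \<Rightarrow> 'k) \<Rightarrow> 'k) \<Rightarrow> bool" where
  "weak_conv z m gamma \<longleftrightarrow> (\<forall>g\<in>Lip0 z. (\<lambda>n. m n g) \<longlonglongrightarrow> gamma g)"

definition is_zero_fun :: "'b::metric_space \<Rightarrow> (('b \<Rightarrow> 'k::real_normed_field) \<Rightarrow> 'k) \<Rightarrow> bool" where
  "is_zero_fun z gamma \<longleftrightarrow> (\<forall>g\<in>Lip0 z. gamma g = 0)"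

end

theory Submission
  imports Defs
begin


fun pickl :: "(nat set \<Rightarrow> nat \<Rightarrow> bool) \<Rightarrow> nat \<Rightarrow> nat list" where
  "pickl P 0 = []"
| "pickl P (Suc n) = pickl P n @ [LEAST j. (\<forall>i\<in>set (pickl P n). i < j) \<and> P (set (pickl P n)) j]"

lemma greedy_seq:
  fixes P :: "nat set \<Rightarrow> nat \<Rightarrow> bool"
  assumes inf: "\<And>A. finite A \<Longrightarrow> infinite {j. P A j}"
  shows "\<exists>\<sigma>::nat\<Rightarrow>nat. strict_mono \<sigma> \<and> (\<forall>n. P (\<sigma> ` {..<n}) (\<sigma> n))"
proof -
  define \<sigma> where "\<sigma> n = (LEAST j. (\<forall>i\<in>set (pickl P n). i < j) \<and> P (set (pickl P n)) j)" for n
  have set_eq: "set (pickl P n) = \<sigma> ` {..<n}" for n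
    by (induction n) (auto simp: \<sigma>_def lessThan_Suc)
  have ex: "\<exists>j. (\<forall>i\<in>set (pickl P n). i < j) \<and> P (set (pickl P n)) j" for n
  proof -
    have "infinite {j. P (set (pickl P n)) j}" by (rule inf) simp
    then obtain j where j: "j > Max (insert 0 (set (pickl P n)))" "P (set (pickl P n)) j"
      unfolding infinite_nat_iff_unbounded by blast
    have "\<forall>i\<in>set (pickl P n). i < j"
      using j(1) by (meson List.finite_set Max_ge finite_insert insertCI le_less_trans)
    with j show ?thesis by blast
  qed
  have pr: "(\<forall>i\<in>set (pickl P n). i < \<sigma> n) \<and> P (set (pickl P n)) (\<sigma> n)" for n
    unfolding \<sigma>_def by (rule LeastI_ex[OF ex])
  have "strict_mono \<sigma>"
  proof (rule strict_monoI)
    fix m n :: nat assume "m < n"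
    then show "\<sigma> m < \<sigma> n" using pr[of n] set_eq[of n] by auto
  qed
  moreover have "\<forall>n. P (\<sigma> ` {..<n}) (\<sigma> n)" using pr set_eq by metis
  ultimately show ?thesis by (intro exI[of _ \<sigma>]) simp
qed

lemma greedy_pairwise:
  fixes P0 :: "nat \<Rightarrow> nat \<Rightarrow> bool" and Q :: "nat \<Rightarrow> bool"
  assumes fin: "\<And>i. finite {j. \<not> P0 i j}" and ev: "eventually Q sequentially"
  shows "\<exists>\<sigma>::nat\<Rightarrow>nat. strict_mono \<sigma> \<and> (\<forall>n. Q (\<sigma> n)) \<and> (\<forall>i j. i < j \<longrightarrow> P0 (\<sigma> i) (\<sigma> j))"
proof -
  obtain N where N: "\<And>n. n \<ge> N \<Longrightarrow> Q n" using ev unfolding eventually_sequentially by blast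
  have "infinite {j. (\<forall>i\<in>A. P0 i j) \<and> Q j}" if "finite A" for A
  proof
    assume f: "finite {j. (\<forall>i\<in>A. P0 i j) \<and> Q j}"
    have "UNIV \<subseteq> {j. (\<forall>i\<in>A. P0 i j) \<and> Q j} \<union> (\<Union>i\<in>A. {j. \<not> P0 i j}) \<union> {..<N}"
      using N by (auto simp: not_le[symmetric])
    moreover have "finite ({j. (\<forall>i\<in>A. P0 i j) \<and> Q j} \<union> (\<Union>i\<in>A. {j. \<not> P0 i j}) \<union> {..<N})"
      using f fin that by auto
    ultimately show False using infinite_UNIV_nat finite_subset by blast
  qed
  then obtain \<sigma> :: "nat \<Rightarrow> nat" where s: "strict_mono \<sigma>" "\<forall>n. (\<forall>i\<in>\<sigma> ` {..<n}. P0 i (\<sigma> n)) \<and> Q (\<sigma> n)"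
    using greedy_seq[of "\<lambda>A j. (\<forall>i\<in>A. P0 i j) \<and> Q j"] by blast
  show ?thesis
    by (rule exI[of _ \<sigma>]) (use s in auto)
qed

lemma separated_subseq:
  fixes a :: "nat \<Rightarrow> 'b::complete_space"
  assumes nc: "\<not> (\<exists>\<sigma> l. strict_mono (\<sigma>::nat\<Rightarrow>nat) \<and> (a \<circ> \<sigma>) \<longlonglongrightarrow> l)"
  shows "\<exists>e>0. \<exists>\<sigma>::nat\<Rightarrow>nat. strict_mono \<sigma> \<and> (\<forall>i j. i \<noteq> j \<longrightarrow> e \<le> dist (a (\<sigma> i)) (a (\<sigma> j)))"
proof -
  have "\<not> (\<forall>e>0. \<exists>k. finite k \<and> range a \<subseteq> (\<Union>x\<in>k. ball x e))"
  proof
    assume tb: "\<forall>e>0. \<exists>k. finite k \<and> range a \<subseteq> (\<Union>x\<in>k. ball x e)"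
    have "compact (closure (range a))"
      unfolding compact_eq_totally_bounded
    proof (intro conjI allI impI)
      show "complete (closure (range a))" by (simp add: complete_eq_closed)
      fix e :: real assume "e > 0"
      then obtain k where k: "finite k" "range a \<subseteq> (\<Union>x\<in>k. ball x (e/2))" using tb
        by (meson half_gt_zero)
      have "closure (range a) \<subseteq> (\<Union>x\<in>k. cball x (e/2))"
      proof (rule closure_minimal)
        show "range a \<subseteq> (\<Union>x\<in>k. cball x (e/2))" using k(2) by (meson UN_mono ball_subset_cball order_trans subset_refl)
        show "closed (\<Union>x\<in>k. cball x (e/2))" using k(1) by (auto intro!: closed_UN)
      qed
      also have "\<dots> \<subseteq> (\<Union>x\<in>k. ball x e)" using \<open>e > 0\<close> by auto
      finally show "\<exists>k. finite k \<and> closure (range a) \<subseteq> (\<Union>x\<in>k. ball x e)" using k by blast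
    qed
    then have "seq_compact (closure (range a))" by (rule compact_imp_seq_compact)
    then obtain l \<sigma> where "strict_mono (\<sigma>::nat\<Rightarrow>nat)" "(a \<circ> \<sigma>) \<longlonglongrightarrow> l"
      by (rule seq_compactE[where f = a]) (auto intro: closure_subset[THEN subsetD])
    with nc show False by blast
  qed
  then obtain e where e: "e > 0" "\<And>k. finite k \<Longrightarrow> \<not> range a \<subseteq> (\<Union>x\<in>k. ball x e)" by blast
  have "infinite {j. \<forall>i\<in>A. e \<le> dist (a i) (a j)}" if "finite A" for A
  proof
    assume f: "finite {j. \<forall>i\<in>A. e \<le> dist (a i) (a j)}"
    have "range a \<subseteq> (\<Union>x\<in>a ` (A \<union> {j. \<forall>i\<in>A. e \<le> dist (a i) (a j)}). ball x e)"
    proof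
      fix z assume "z \<in> range a"
      then obtain j where j: "z = a j" by blast
      show "z \<in> (\<Union>x\<in>a ` (A \<union> {j. \<forall>i\<in>A. e \<le> dist (a i) (a j)}). ball x e)"
      proof (cases "\<forall>i\<in>A. e \<le> dist (a i) (a j)")
        case True then show ?thesis using j e(1) by auto
      next
        case False then obtain i where "i \<in> A" "dist (a i) (a j) < e" by (auto simp: not_le)
        then show ?thesis using j by auto
      qed
    qed
    with e(2)[of "a ` (A \<union> {j. \<forall>i\<in>A. e \<le> dist (a i) (a j)})"] f that show False by auto
  qed
  then obtain \<sigma> :: "nat \<Rightarrow> nat" where s: "strict_mono \<sigma>" "\<forall>n. \<forall>i\<in>\<sigma> ` {..<n}. e \<le> dist (a i) (a (\<sigma> n))"
    using greedy_seq[of "\<lambda>A j. \<forall>i\<in>A. e \<le> dist (a i) (a j)"] by blast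
  have "e \<le> dist (a (\<sigma> i)) (a (\<sigma> j))" if "i \<noteq> j" for i j
  proof (cases "i < j")
    case True then show ?thesis using s(2) by auto
  next
    case False then have "j < i" using that by auto
    then show ?thesis using s(2) by (auto simp: dist_commute)
  qed
  with e(1) s(1) show ?thesis by blast
qed

lemma ev_finite_compl: "eventually P sequentially \<Longrightarrow> finite {n. \<not> P n}"
  unfolding eventually_sequentially
  by (metis (mono_tags, lifting) finite_Collect_less_nat finite_subset mem_Collect_eq not_le subsetI)

lemma finite_compl_ev: "finite {n. \<not> P n} \<Longrightarrow> eventually P sequentially"
  by (metis (mono_tags, lifting) cofinite_eq_sequentially eventually_cofinite)

lemma freq_subseq: "strict_mono (\<sigma>::nat\<Rightarrow>nat) \<Longrightarrow> frequently (\<lambda>k. P (\<sigma> k)) sequentially \<Longrightarrow> frequently P sequentially"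
  unfolding frequently_sequentially by (meson le_trans seq_suble)

lemma lim_ge_freq:
  fixes r :: "nat \<Rightarrow> real"
  assumes "r \<longlonglongrightarrow> L" "frequently (\<lambda>n. c \<le> r n) sequentially"
  shows "c \<le> L"
proof (rule ccontr)
  assume "\<not> c \<le> L"
  then have "eventually (\<lambda>n. r n < c) sequentially" using assms(1) order_tendstoD(2) by fastforce
  with assms(2) have "frequently (\<lambda>n. c \<le> r n \<and> r n < c) sequentially"
    by (rule frequently_eventually_frequently)
  then show False by (auto dest: frequently_ex)
qed

lemma lim_le_freq:
  fixes r :: "nat \<Rightarrow> real"
  assumes "r \<longlonglongrightarrow> L" "frequently (\<lambda>n. r n \<le> c) sequentially"
  shows "L \<le> c"
proof (rule ccontr)
  assume "\<not> L \<le> c"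
  then have "eventually (\<lambda>n. c < r n) sequentially" using assms(1) order_tendstoD(1) by fastforce
  with assms(2) have "frequently (\<lambda>n. r n \<le> c \<and> c < r n) sequentially"
    by (rule frequently_eventually_frequently)
  then show False by (auto dest: frequently_ex)
qed

lemma not_conv_freq:
  fixes r :: "nat \<Rightarrow> real"
  assumes "frequently (\<lambda>n. r n \<le> x) sequentially" "frequently (\<lambda>n. y \<le> r n) sequentially" "x < y"
  shows "\<not> convergent r"
  using assms lim_ge_freq lim_le_freq unfolding convergent_def by force

lemma of_real_conv:
  assumes "(\<lambda>n. of_real (r n) :: 'k::real_normed_field) \<longlonglongrightarrow> l"
  shows "convergent r"
proof -
  have "Cauchy (\<lambda>n. of_real (r n) :: 'k)" using assms by (rule LIMSEQ_imp_Cauchy)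
  then have "Cauchy r" unfolding Cauchy_def by simp
  then show ?thesis by (simp add: Cauchy_convergent_iff)
qed

lemma norm_lim_ge_freq:
  fixes X :: "nat \<Rightarrow> 'k::real_normed_vector"
  assumes "X \<longlonglongrightarrow> l" "frequently (\<lambda>n. c \<le> norm (X n)) sequentially"
  shows "c \<le> norm l"
  using lim_ge_freq[OF tendsto_norm[OF assms(1)] assms(2)] .

lemma norm_lim_le_freq:
  fixes X :: "nat \<Rightarrow> 'k::real_normed_vector"
  assumes "X \<longlonglongrightarrow> l" "frequently (\<lambda>n. norm (X n) \<le> c) sequentially"
  shows "norm l \<le> c"
  using lim_le_freq[OF tendsto_norm[OF assms(1)] assms(2)] .

lemma zero_if_small:
  fixes x :: "'k::real_normed_vector"
  assumes "\<And>e. e > 0 \<Longrightarrow> norm x \<le> e * K" "K \<ge> 0"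
  shows "x = 0"
proof (rule ccontr)
  assume "x \<noteq> 0"
  then have p: "norm x > 0" by simp
  have "norm x \<le> (norm x / (K + 1)) * K" using assms(1)[of "norm x / (K+1)"] p assms(2) by simp
  also have "\<dots> < norm x" using p assms(2) by (simp add: field_simps)
  finally show False by simp
qed

lemma cluster_of_subseq:
  assumes "strict_mono (\<sigma>::nat\<Rightarrow>nat)" "(w \<circ> \<sigma>) \<longlonglongrightarrow> l" "open U" "l \<in> U"
  shows "frequently (\<lambda>n. w n \<in> U) sequentially"
proof -
  have "eventually (\<lambda>k. w (\<sigma> k) \<in> U) sequentially"
    using assms(2-4) unfolding tendsto_def by (simp add: o_def)
  then have "frequently (\<lambda>k. w (\<sigma> k) \<in> U) sequentially" by (simp add: eventually_frequently)
  then show ?thesis by (rule freq_subseq[OF assms(1)])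
qed

definition Hf :: "'b::metric_space set \<Rightarrow> 'b \<Rightarrow> 'k::real_normed_field" where
  "Hf Z = (\<lambda>p. of_real (infdist p Z))"

lemma Hf_lip: "1-lipschitz_on UNIV (Hf Z :: 'b::metric_space \<Rightarrow> 'k::real_normed_field)"
  unfolding lipschitz_on_def Hf_def
  by (simp add: dist_real_def infdist_triangle_abs)

lemma Hf_Lip0: "z \<in> Z \<Longrightarrow> (Hf Z :: 'b::metric_space \<Rightarrow> 'k::real_normed_field) \<in> Lip0 z"
  unfolding Lip0_def using Hf_lip[of Z] by (auto simp: Hf_def)

lemma Hf_quot: "(Hf Z u - Hf Z v) / (of_real d :: 'k::real_normed_field) = of_real ((infdist u Z - infdist v Z) / d)"
  by (simp add: Hf_def)

definition tr :: "real \<Rightarrow> 'k::real_normed_vector \<Rightarrow> 'k" where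
  "tr R w = (if norm w \<le> R then w else (R / norm w) *\<^sub>R w)"

lemma tr_norm: "R \<ge> 0 \<Longrightarrow> norm (tr R w) \<le> R"
  by (auto simp: tr_def)

lemma tr_id: "norm w \<le> R \<Longrightarrow> tr R w = w"
  by (simp add: tr_def)

lemma tr_out_lemma:
  fixes w v :: "'k::real_normed_vector"
  assumes "R \<ge> 0" "norm w > R" "norm v \<le> R"
  shows "norm ((R / norm w) *\<^sub>R w - v) \<le> 2 * norm (w - v)"
proof -
  have nw: "norm w > 0" using assms by linarith
  have "norm ((R / norm w) *\<^sub>R w - v) \<le> norm ((R / norm w) *\<^sub>R w - w) + norm (w - v)"
    by (rule norm_diff_triangle_le[where y = w]) simp_all
  also have "(R / norm w) *\<^sub>R w - w = (R / norm w - 1) *\<^sub>R w" by (simp add: algebra_simps)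
  also have "norm \<dots> = \<bar>R / norm w - 1\<bar> * norm w" by simp
  also have "\<bar>R / norm w - 1\<bar> = 1 - R / norm w" using nw assms by (simp add: field_simps)
  also have "(1 - R / norm w) * norm w = norm w - R" using nw by (simp add: field_simps)
  also have "norm w - R \<le> norm w - norm v" using assms by simp
  also have "\<dots> \<le> norm (w - v)" by (rule norm_triangle_ineq2)
  finally show ?thesis by simp
qed

lemma tr_both_out:
  fixes w v :: "'k::real_normed_vector"
  assumes "R \<ge> 0" "norm w > R" "norm v > R" "norm w \<ge> norm v"
  shows "norm ((R / norm w) *\<^sub>R w - (R / norm v) *\<^sub>R v) \<le> 2 * norm (w - v)"
proof -
  have nw: "norm w > 0" and nv: "norm v > 0" using assms by linarith+
  have eq: "(R / norm w) *\<^sub>R w - (R / norm v) *\<^sub>R v = (R / norm v) *\<^sub>R ((norm v / norm w) *\<^sub>R w - v)"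
    using nv nw by (simp add: algebra_simps)
  have "norm ((norm v / norm w) *\<^sub>R w - v) \<le> 2 * norm (w - v)"
  proof -
    have "norm ((norm v / norm w) *\<^sub>R w - v) \<le> norm ((norm v / norm w) *\<^sub>R w - w) + norm (w - v)"
      by (rule norm_diff_triangle_le[where y = w]) simp_all
    also have "(norm v / norm w) *\<^sub>R w - w = (norm v / norm w - 1) *\<^sub>R w" by (simp add: algebra_simps)
    also have "norm \<dots> = \<bar>norm v / norm w - 1\<bar> * norm w" by simp
    also have "\<bar>norm v / norm w - 1\<bar> = 1 - norm v / norm w" using nw assms by (simp add: field_simps)
    also have "(1 - norm v / norm w) * norm w = norm w - norm v" using nw by (simp add: field_simps)
    also have "norm w - norm v \<le> norm (w - v)" by (rule norm_triangle_ineq2)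
    finally show ?thesis by simp
  qed
  moreover have "R / norm v \<le> 1" using assms nv by simp
  ultimately have "(R / norm v) * norm ((norm v / norm w) *\<^sub>R w - v) \<le> 1 * (2 * norm (w - v))"
    using assms(1) nv by (intro mult_mono) auto
  then show ?thesis unfolding eq using assms(1) nv by simp
qed

lemma tr_lip:
  fixes w v :: "'k::real_normed_vector"
  assumes "R \<ge> 0"
  shows "norm (tr R w - tr R v) \<le> 2 * norm (w - v)"
proof -
  consider "norm w \<le> R" "norm v \<le> R" | "norm w > R" "norm v \<le> R" | "norm w \<le> R" "norm v > R"
    | "norm w > R" "norm v > R" "norm w \<ge> norm v" | "norm w > R" "norm v > R" "norm v \<ge> norm w" by linarith
  then show ?thesis
  proof cases
    case 1 then show ?thesis by (simp add: tr_def)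
  next
    case 2 then show ?thesis using tr_out_lemma[OF assms 2] by (simp add: tr_def)
  next
    case 3 then show ?thesis using tr_out_lemma[OF assms 3(2,1)] by (simp add: tr_def norm_minus_commute)
  next
    case 4 then show ?thesis using tr_both_out[OF assms 4] by (simp add: tr_def)
  next
    case 5 then show ?thesis using tr_both_out[OF assms 5(2,1,3)] by (simp add: tr_def norm_minus_commute)
  qed
qed



lemma approx_data:
  assumes "gamma \<in> free_space z" "e > 0"
  obtains S c where "finite S"
    "dual_norm_le z (\<lambda>g. (\<Sum>x\<in>S. c x * delta x g) - gamma g) e"
proof -
  have "\<exists>phi::nat \<Rightarrow> _. (\<forall>k. phi k \<in> span_deltas) \<and> (\<forall>e>0. \<exists>K. \<forall>k\<ge>K. dual_norm_le z (\<lambda>g. phi k g - gamma g) e)"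
    using assms(1) unfolding free_space_def mem_Collect_eq .
  then obtain phi :: "nat \<Rightarrow> _" where phi1: "\<forall>k. phi k \<in> span_deltas"
    and phi2: "\<forall>e>0. \<exists>K. \<forall>k\<ge>K. dual_norm_le z (\<lambda>g. phi k g - gamma g) e"
    by (elim exE conjE)
  from phi2 assms(2) obtain K where K: "\<forall>k\<ge>K. dual_norm_le z (\<lambda>g. phi k g - gamma g) e"
    by blast
  then have dn: "dual_norm_le z (\<lambda>g. phi K g - gamma g) e" by simp
  have "phi K \<in> span_deltas" using phi1 by simp
  then obtain S c where S: "finite S" "phi K = (\<lambda>g. \<Sum>x\<in>S. c x * delta x g)"
    unfolding span_deltas_def by blast
  show ?thesis by (rule that[OF S(1)]) (use dn in \<open>simp add: S(2)\<close>)
qed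

lemma dnD: "dual_norm_le z phi e \<Longrightarrow> g \<in> Lip0 z \<Longrightarrow> L-lipschitz_on UNIV g \<Longrightarrow> norm (phi g) \<le> e * L"
  unfolding dual_norm_le_def by blast
lemma P2:
  fixes a b :: "nat \<Rightarrow> 'b::metric_space" and d :: "nat \<Rightarrow> real" and z :: 'b
    and gamma :: "('b \<Rightarrow> 'k::real_normed_field) \<Rightarrow> 'k" and M :: "nat \<Rightarrow> ('b \<Rightarrow> 'k) \<Rightarrow> 'k"
  assumes dpos: "\<And>n. 0 < d n"
    and Mdef: "\<And>n g. M n g = (g (a n) - g (b n)) / of_real (d n)"
    and conv: "\<And>g. g \<in> Lip0 z \<Longrightarrow> (\<lambda>n. M n g) \<longlonglongrightarrow> gamma g"
    and gin: "gamma \<in> free_space z"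
    and big: "\<And>B. frequently (\<lambda>n. B \<le> d n) sequentially"
  shows "is_zero_fun z gamma"
  unfolding is_zero_fun_def
proof
  fix g :: "'b \<Rightarrow> 'k" assume g: "g \<in> Lip0 z"
  then obtain L where L: "L-lipschitz_on UNIV g" and gz: "g z = 0" unfolding Lip0_def by blast
  have L0: "L \<ge> 0" using L lipschitz_on_nonneg by blast
  show "gamma g = 0"
  proof (rule zero_if_small[where K = "3*L"])
    fix e :: real assume e: "e > 0"
    obtain S c where S: "finite S" and dn: "dual_norm_le z (\<lambda>g. (\<Sum>x\<in>S. c x * delta x g) - gamma g) e"
      using approx_data[OF gin e] by blast
    define R where "R = 1 + (\<Sum>x\<in>S. norm (g x))"
    have R1: "R \<ge> 1" unfolding R_def by (simp add: sum_nonneg)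
    have gS: "norm (g x) \<le> R" if "x \<in> S" for x
    proof -
      have "norm (g x) \<le> (\<Sum>x\<in>S. norm (g x))" by (rule member_le_sum) (use S that in auto)
      then show ?thesis unfolding R_def by simp
    qed
    define g' where "g' = (\<lambda>p. tr R (g p))"
    have lip': "(2*L)-lipschitz_on UNIV g'"
    proof (rule lipschitz_onI)
      fix p q :: 'b
      have "dist (g' p) (g' q) = norm (tr R (g p) - tr R (g q))" by (simp add: g'_def dist_norm)
      also have "\<dots> \<le> 2 * norm (g p - g q)" by (rule tr_lip) (use R1 in simp)
      also have "\<dots> \<le> 2 * (L * dist p q)" using lipschitz_onD[OF L, of p q] by (simp add: dist_norm)
      finally show "dist (g' p) (g' q) \<le> 2 * L * dist p q" by simp
    qed (use L0 in simp)
    have g'z: "g' z = 0" using gz R1 by (simp add: g'_def tr_id)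
    have g'L: "g' \<in> Lip0 z" unfolding Lip0_def using lip' g'z by blast
    have eqS: "(\<Sum>x\<in>S. c x * delta x g') = (\<Sum>x\<in>S. c x * delta x g)"
      by (rule sum.cong) (auto simp: delta_def g'_def tr_id gS)
    have zero': "gamma g' = 0"
    proof (rule zero_if_small[where K = 1])
      fix \<delta> :: real assume \<delta>: "\<delta> > 0"
      have "frequently (\<lambda>n. norm (M n g') \<le> \<delta>) sequentially"
        using big[of "2*R/\<delta>"]
      proof (rule frequently_elim1)
        fix n assume n: "2 * R / \<delta> \<le> d n"
        have "norm (g' (a n) - g' (b n)) \<le> norm (g' (a n)) + norm (g' (b n))" by (rule norm_triangle_ineq4)
        also have "\<dots> \<le> 2 * R" using tr_norm[of R] R1 unfolding g'_def
          by (smt (verit, best))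
        finally have nn: "norm (g' (a n) - g' (b n)) \<le> 2 * R" .
        have "norm (M n g') = norm (g' (a n) - g' (b n)) / d n"
          using dpos[of n] by (simp add: Mdef norm_divide)
        also have "\<dots> \<le> 2 * R / d n" using nn dpos[of n] by (simp add: divide_right_mono)
        also have "\<dots> \<le> \<delta>" using n dpos[of n] \<delta> by (simp add: field_simps)
        finally show "norm (M n g') \<le> \<delta>" .
      qed
      then have "norm (gamma g') \<le> \<delta>" by (rule norm_lim_le_freq[OF conv[OF g'L]])
      then show "norm (gamma g') \<le> \<delta> * 1" by simp
    qed simp
    have n1: "norm ((\<Sum>x\<in>S. c x * delta x g) - gamma g) \<le> e * L" using dnD[OF dn g L] by simp
    have n2: "norm ((\<Sum>x\<in>S. c x * delta x g) - gamma g') \<le> e * (2 * L)"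
      using dnD[OF dn g'L lip'] eqS by simp
    have "gamma g = ((\<Sum>x\<in>S. c x * delta x g) - gamma g') - ((\<Sum>x\<in>S. c x * delta x g) - gamma g)"
      using zero' by simp
    then have "norm (gamma g) = norm (((\<Sum>x\<in>S. c x * delta x g) - gamma g') - ((\<Sum>x\<in>S. c x * delta x g) - gamma g))"
      by (rule arg_cong)
    then have "norm (gamma g) \<le> e * (2*L) + e * L"
      using norm_triangle_ineq4[of "(\<Sum>x\<in>S. c x * delta x g) - gamma g'" "(\<Sum>x\<in>S. c x * delta x g) - gamma g"] n1 n2
      by linarith
    then show "norm (gamma g) \<le> e * (3 * L)" by (simp add: algebra_simps)
  qed (use L0 in simp)
qed


lemma infdist_ge:
  assumes "Z \<noteq> {}" "\<And>y. y \<in> Z \<Longrightarrow> e \<le> dist x y"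
  shows "e \<le> infdist x Z"
  unfolding infdist_notempty[OF assms(1)] by (rule cINF_greatest) (use assms in auto)

lemma subsingleton_finite:
  assumes "\<And>n m. n \<in> A \<Longrightarrow> m \<in> A \<Longrightarrow> n = m"
  shows "finite A"
proof (cases "A = {}")
  case False
  then obtain n where "n \<in> A" by blast
  then have "A \<subseteq> {n}" using assms by blast
  then show ?thesis using finite_subset by blast
qed simp

lemma G1A:
  fixes a b :: "nat \<Rightarrow> 'b::metric_space" and F :: "'b set"
  assumes F: "finite F" and pos: "eventually (\<lambda>n. 0 < dist (a n) (b n)) sequentially"
    and lim0: "(\<lambda>n. dist (a n) (b n)) \<longlonglongrightarrow> 0"
    and s0: "strict_mono (\<sigma>0::nat\<Rightarrow>nat)" and ap: "(a \<circ> \<sigma>0) \<longlonglongrightarrow> p"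
  shows "\<exists>Z. F \<subseteq> Z \<and> frequently (\<lambda>n. dist (a n) (b n) / 4 \<le> \<bar>infdist (a n) Z - infdist (b n) Z\<bar>) sequentially"
proof -
  define a' where "a' = a \<circ> \<sigma>0"
  define b' where "b' = b \<circ> \<sigma>0"
  define r where "r n = dist (a' n) (b' n)" for n
  have rlim: "r \<longlonglongrightarrow> 0" unfolding r_def a'_def b'_def o_def
    using LIMSEQ_subseq_LIMSEQ[OF lim0 s0] by (simp add: o_def)
  have rpos: "eventually (\<lambda>n. 0 < r n) sequentially" unfolding r_def a'_def b'_def o_def
    by (rule eventually_subseq[OF s0 pos])
  have r0: "r n \<ge> 0" for n by (simp add: r_def)
  define ta where "ta n = dist (a' n) p" for n
  define tb where "tb n = dist (b' n) p" for n
  have talim: "ta \<longlonglongrightarrow> 0" using tendsto_dist[OF ap tendsto_const[of p]] unfolding ta_def a'_def by (simp add: o_def)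
  have tb_le: "tb n \<le> ta n + r n" for n
    unfolding ta_def tb_def r_def using dist_triangle[of "b' n" p "a' n"] by (simp add: dist_commute)
  define u where "u n = (if ta n \<le> tb n then a' n else b' n)" for n
  define v where "v n = (if ta n \<le> tb n then b' n else a' n)" for n
  define t where "t n = dist (u n) p" for n
  define R where "R n = dist (v n) p" for n
  have tR: "t n \<le> R n" for n unfolding t_def R_def u_def v_def ta_def tb_def by auto
  have uv: "dist (v n) (u n) = r n" for n unfolding u_def v_def r_def by (auto simp: dist_commute)
  have rR: "r n \<le> 2 * R n" for n
  proof -
    have "r n \<le> dist (v n) p + dist (u n) p" using uv[of n] dist_triangle3[of "v n" "u n" p] by (simp add: dist_commute)
    then show ?thesis using tR[of n] unfolding t_def R_def by simp
  qed
  have R_le: "R n \<le> ta n + tb n" for n unfolding R_def v_def ta_def tb_def by auto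
  have Rlim: "R \<longlonglongrightarrow> 0"
  proof (rule tendsto_sandwich[of "\<lambda>_. 0" _ _ "\<lambda>n. ta n + ta n + r n"])
    show "eventually (\<lambda>n. 0 \<le> R n) sequentially" by (simp add: R_def)
    show "eventually (\<lambda>n. R n \<le> ta n + ta n + r n) sequentially"
    proof (rule always_eventually, rule allI)
      fix n show "R n \<le> ta n + ta n + r n" using R_le[of n] tb_le[of n] by linarith
    qed
    show "(\<lambda>n. ta n + ta n + r n) \<longlonglongrightarrow> 0" using talim rlim by (auto intro!: tendsto_add_zero)
  qed simp
  define Q where "Q n = (0 < r n \<and> (\<forall>x\<in>F - {p}. r n \<le> dist (v n) x))" for n
  have evQ: "eventually Q sequentially"
  proof -
    have "eventually (\<lambda>n. r n \<le> dist (v n) x) sequentially" if x: "x \<in> F - {p}" for x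
    proof -
      have "(\<lambda>n. dist p x - R n - r n) \<longlonglongrightarrow> dist p x - 0 - 0"
        by (intro tendsto_diff tendsto_const Rlim rlim)
      moreover have "dist p x > 0" using x by auto
      ultimately have "eventually (\<lambda>n. 0 < dist p x - R n - r n) sequentially"
        using order_tendstoD(1) by fastforce
      then show ?thesis
      proof (rule eventually_mono)
        fix n assume "0 < dist p x - R n - r n"
        moreover have "dist p x \<le> dist p (v n) + dist (v n) x" by (rule dist_triangle)
        ultimately show "r n \<le> dist (v n) x" unfolding R_def by (simp add: dist_commute)
      qed
    qed
    then have "eventually (\<lambda>n. \<forall>x\<in>F - {p}. r n \<le> dist (v n) x) sequentially"
      using F by (intro eventually_ball_finite) auto
    then show ?thesis using rpos unfolding Q_def by (auto elim: eventually_elim2)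
  qed
  define P0 where "P0 i j = (0 < r i \<longrightarrow> R j \<le> r i / 4 \<and> (0 < t i \<longrightarrow> R j \<le> t i / 2))" for i j
  have finP: "finite {j. \<not> P0 i j}" for i
  proof -
    have "eventually (P0 i) sequentially"
    proof (cases "0 < r i")
      case True
      have e1: "eventually (\<lambda>j. R j < r i / 4) sequentially"
        using order_tendstoD(2)[OF Rlim, of "r i / 4"] True by fastforce
      show ?thesis
      proof (cases "0 < t i")
        case True
        have e2: "eventually (\<lambda>j. R j < t i / 2) sequentially"
          using order_tendstoD(2)[OF Rlim, of "t i / 2"] True by fastforce
        show ?thesis using e1 e2 unfolding P0_def by (auto elim: eventually_elim2)
      next
        case False
        then show ?thesis using e1 unfolding P0_def by (auto elim: eventually_mono)
      qed
    qed (simp add: P0_def[abs_def])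
    then show ?thesis by (rule ev_finite_compl)
  qed
  obtain \<sigma> :: "nat \<Rightarrow> nat" where s: "strict_mono \<sigma>" "\<forall>n. Q (\<sigma> n)" "\<forall>i j. i < j \<longrightarrow> P0 (\<sigma> i) (\<sigma> j)"
    using greedy_pairwise[of P0 Q, OF finP evQ] by (elim exE conjE) blast
  define Z where "Z = F \<union> {p} \<union> u ` range \<sigma>"
  have main: "r (\<sigma> k) / 4 \<le> \<bar>infdist (a' (\<sigma> k)) Z - infdist (b' (\<sigma> k)) Z\<bar>" for k
  proof -
    define n where "n = \<sigma> k"
    have Qn: "Q n" using s(2) by (simp add: n_def)
    have u0: "infdist (u n) Z = 0" unfolding Z_def n_def by simp
    have vge: "r n / 4 \<le> infdist (v n) Z"
    proof (rule infdist_ge)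
      show "Z \<noteq> {}" unfolding Z_def by blast
      fix y assume y: "y \<in> Z"
      show "r n / 4 \<le> dist (v n) y"
      proof -
        consider "y \<in> F - {p}" | "y = p" | j where "y = u (\<sigma> j)"
          using y unfolding Z_def by blast
        then show ?thesis
        proof cases
          case 1 then show ?thesis using Qn r0[of n] unfolding Q_def by force
        next
          case 2 then show ?thesis using rR[of n] r0[of n] unfolding R_def by simp
        next
          case 3
          consider "j = k" | "k < j" | "j < k" by linarith
          then show ?thesis
          proof cases
            case 1 then show ?thesis using 3 uv[of n] r0[of n] by (simp add: n_def)
          next
            case 2
            define m where "m = \<sigma> j"
            have "P0 n m" using s(3) 2 by (simp add: n_def m_def)
            then have Rm: "R m \<le> r n / 4" using Qn unfolding P0_def Q_def by simp
            have "R n - t m \<le> dist (v n) (u m)"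
              unfolding R_def t_def using dist_triangle[of "v n" p "u m"] by (simp add: dist_commute)
            then show ?thesis using Rm tR[of m] rR[of n] 3 by (simp add: m_def)
          next
            case 2: 3
            define m where "m = \<sigma> j"
            have "P0 m n" using s(3) 2 by (simp add: n_def m_def)
            moreover have "Q m" using s(2) by (simp add: m_def)
            ultimately have Rm: "0 < t m \<longrightarrow> R n \<le> t m / 2" unfolding P0_def Q_def by simp
            show ?thesis
            proof (cases "t m = 0")
              case True
              then have "u m = p" unfolding t_def by simp
              then show ?thesis using 3 rR[of n] r0[of n] unfolding R_def by (simp add: m_def)
            next
              case False
              then have "0 < t m" unfolding t_def by simp
              with Rm have "R n \<le> t m / 2" by simp
              moreover have "t m - R n \<le> dist (v n) (u m)"
                unfolding R_def t_def using dist_triangle[of "u m" p "v n"] by (simp add: dist_commute)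
              ultimately show ?thesis using 3 rR[of n] r0[of n] by (simp add: m_def)
            qed
          qed
        qed
      qed
    qed
    have "\<bar>infdist (a' n) Z - infdist (b' n) Z\<bar> = \<bar>infdist (u n) Z - infdist (v n) Z\<bar>"
      unfolding u_def v_def by (auto simp: abs_minus_commute)
    also have "\<dots> = infdist (v n) Z" using u0 by (simp add: infdist_nonneg)
    finally show ?thesis using vge by (simp add: n_def)
  qed
  have "frequently (\<lambda>k. dist (a ((\<sigma>0 \<circ> \<sigma>) k)) (b ((\<sigma>0 \<circ> \<sigma>) k)) / 4
          \<le> \<bar>infdist (a ((\<sigma>0 \<circ> \<sigma>) k)) Z - infdist (b ((\<sigma>0 \<circ> \<sigma>) k)) Z\<bar>) sequentially"
  proof (rule frequently_sequentially[THEN iffD2], intro allI)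
    fix N show "\<exists>k\<ge>N. dist (a ((\<sigma>0 \<circ> \<sigma>) k)) (b ((\<sigma>0 \<circ> \<sigma>) k)) / 4
          \<le> \<bar>infdist (a ((\<sigma>0 \<circ> \<sigma>) k)) Z - infdist (b ((\<sigma>0 \<circ> \<sigma>) k)) Z\<bar>"
      using main[of N] unfolding r_def a'_def b'_def by (intro exI[of _ N]) (simp add: o_def)
  qed
  then have "frequently (\<lambda>n. dist (a n) (b n) / 4 \<le> \<bar>infdist (a n) Z - infdist (b n) Z\<bar>) sequentially"
    by (rule freq_subseq[OF strict_mono_o[OF s0 s(1)]])
  moreover have "F \<subseteq> Z" unfolding Z_def by blast
  ultimately show ?thesis by blast
qed


lemma G1B:
  fixes a b :: "nat \<Rightarrow> 'b::complete_space" and F :: "'b set"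
  assumes F: "finite F" and pos: "eventually (\<lambda>n. 0 < dist (a n) (b n)) sequentially"
    and lim0: "(\<lambda>n. dist (a n) (b n)) \<longlonglongrightarrow> 0"
    and nc: "\<not> (\<exists>\<sigma> l. strict_mono (\<sigma>::nat\<Rightarrow>nat) \<and> (a \<circ> \<sigma>) \<longlonglongrightarrow> l)"
  shows "\<exists>Z. F \<subseteq> Z \<and> frequently (\<lambda>n. dist (a n) (b n) / 4 \<le> \<bar>infdist (a n) Z - infdist (b n) Z\<bar>) sequentially"
proof -
  obtain e \<sigma>0 where e: "e > 0" and s0: "strict_mono (\<sigma>0::nat\<Rightarrow>nat)"
    and sep: "\<forall>i j. i \<noteq> j \<longrightarrow> e \<le> dist (a (\<sigma>0 i)) (a (\<sigma>0 j))"
    using separated_subseq[OF nc] by (elim exE conjE) blast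
  define a' where "a' = a \<circ> \<sigma>0"
  define b' where "b' = b \<circ> \<sigma>0"
  define r where "r n = dist (a' n) (b' n)" for n
  have rlim: "r \<longlonglongrightarrow> 0" unfolding r_def a'_def b'_def o_def
    using LIMSEQ_subseq_LIMSEQ[OF lim0 s0] by (simp add: o_def)
  have rpos: "eventually (\<lambda>n. 0 < r n) sequentially" unfolding r_def a'_def b'_def o_def
    by (rule eventually_subseq[OF s0 pos])
  have sep': "e \<le> dist (a' i) (a' j)" if "i \<noteq> j" for i j
    using sep that unfolding a'_def by simp
  have finx: "finite {n. \<not> e / 2 \<le> dist (a' n) x}" for x
  proof (rule subsingleton_finite)
    fix n m assume n: "n \<in> {n. \<not> e / 2 \<le> dist (a' n) x}" and m: "m \<in> {n. \<not> e / 2 \<le> dist (a' n) x}"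
    show "n = m"
    proof (rule ccontr)
      assume "n \<noteq> m"
      then have "e \<le> dist (a' n) (a' m)" by (rule sep')
      moreover have "dist (a' n) (a' m) \<le> dist (a' n) x + dist (a' m) x" using dist_triangle[where x="a' n" and y=x and z="a' m"] dist_commute[of x "a' m"] by linarith
      ultimately show False using n m by simp
    qed
  qed
  define Q where "Q n = (0 < r n \<and> r n < e / 4 \<and> (\<forall>x\<in>F. e / 2 \<le> dist (a' n) x))" for n
  have evQ: "eventually Q sequentially"
  proof -
    have e1: "eventually (\<lambda>n. r n < e / 4) sequentially"
      using order_tendstoD(2)[OF rlim, of "e / 4"] e by simp
    have e2: "eventually (\<lambda>n. \<forall>x\<in>F. e / 2 \<le> dist (a' n) x) sequentially"
      using F by (intro eventually_ball_finite ballI finite_compl_ev finx)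
    show ?thesis using eventually_conj[OF rpos eventually_conj[OF e1 e2]] unfolding Q_def[abs_def] by simp
  qed
  define Z where "Z = F \<union> range a'"
  have main: "r n / 4 \<le> \<bar>infdist (a' n) Z - infdist (b' n) Z\<bar>" if Qn: "Q n" for n
  proof -
    have a0: "infdist (a' n) Z = 0" unfolding Z_def by simp
    have bge: "r n / 4 \<le> infdist (b' n) Z"
    proof (rule infdist_ge)
      show "Z \<noteq> {}" unfolding Z_def by blast
      fix y assume y: "y \<in> Z"
      have r0: "0 < r n" "r n < e / 4" using Qn unfolding Q_def by auto
      show "r n / 4 \<le> dist (b' n) y"
      proof (cases "y \<in> F")
        case True
        then have "e / 2 \<le> dist (a' n) y" using Qn unfolding Q_def by auto
        moreover have "dist (a' n) y \<le> r n + dist (b' n) y" unfolding r_def by (rule dist_triangle)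
        ultimately show ?thesis using r0 by linarith
      next
        case False
        then obtain m where m: "y = a' m" using y unfolding Z_def by blast
        show ?thesis
        proof (cases "m = n")
          case True then show ?thesis using m r0 by (simp add: r_def dist_commute)
        next
          case False
          then have "e \<le> dist (a' n) (a' m)" by (intro sep') simp
          moreover have "dist (a' n) (a' m) \<le> r n + dist (b' n) (a' m)" unfolding r_def by (rule dist_triangle)
          ultimately show ?thesis using r0 unfolding m by linarith
        qed
      qed
    qed
    show ?thesis using a0 bge by simp
  qed
  have "eventually (\<lambda>k. dist (a (\<sigma>0 k)) (b (\<sigma>0 k)) / 4 \<le> \<bar>infdist (a (\<sigma>0 k)) Z - infdist (b (\<sigma>0 k)) Z\<bar>) sequentially"
    using evQ by (rule eventually_mono) (use main in \<open>simp add: r_def a'_def b'_def\<close>)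
  then have "frequently (\<lambda>k. dist (a (\<sigma>0 k)) (b (\<sigma>0 k)) / 4 \<le> \<bar>infdist (a (\<sigma>0 k)) Z - infdist (b (\<sigma>0 k)) Z\<bar>) sequentially"
    by (simp add: eventually_frequently)
  then have "frequently (\<lambda>n. dist (a n) (b n) / 4 \<le> \<bar>infdist (a n) Z - infdist (b n) Z\<bar>) sequentially"
    by (rule freq_subseq[OF s0])
  moreover have "F \<subseteq> Z" unfolding Z_def by blast
  ultimately show ?thesis by blast
qed

lemma G1:
  fixes a b :: "nat \<Rightarrow> 'b::complete_space" and F :: "'b set"
  assumes F: "finite F" and pos: "eventually (\<lambda>n. 0 < dist (a n) (b n)) sequentially"
    and lim0: "(\<lambda>n. dist (a n) (b n)) \<longlonglongrightarrow> 0"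
  shows "\<exists>Z. F \<subseteq> Z \<and> frequently (\<lambda>n. dist (a n) (b n) / 4 \<le> \<bar>infdist (a n) Z - infdist (b n) Z\<bar>) sequentially"
proof (cases "\<exists>\<sigma> l. strict_mono (\<sigma>::nat\<Rightarrow>nat) \<and> (a \<circ> \<sigma>) \<longlonglongrightarrow> l")
  case True
  then obtain \<sigma> l where "strict_mono (\<sigma>::nat\<Rightarrow>nat)" "(a \<circ> \<sigma>) \<longlonglongrightarrow> l" by blast
  then show ?thesis by (rule G1A[OF F pos lim0])
next
  case False
  then show ?thesis by (rule G1B[OF F pos lim0])
qed


lemma ratio_bound:
  fixes a b :: "nat \<Rightarrow> 'b::metric_space" and d :: "nat \<Rightarrow> real" and z :: 'b
    and gamma :: "('b \<Rightarrow> 'k::real_normed_field) \<Rightarrow> 'k" and M :: "nat \<Rightarrow> ('b \<Rightarrow> 'k) \<Rightarrow> 'k"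
  assumes dpos: "\<And>n. 0 < d n"
    and Mdef: "\<And>n g. M n g = (g (a n) - g (b n)) / of_real (d n)"
    and conv: "\<And>g. g \<in> Lip0 z \<Longrightarrow> (\<lambda>n. M n g) \<longlonglongrightarrow> gamma g"
    and nz: "\<not> is_zero_fun z gamma"
  shows "\<exists>c>0. eventually (\<lambda>n. c * d n < dist (a n) (b n)) sequentially"
proof -
  obtain g0 where g0: "g0 \<in> Lip0 z" "gamma g0 \<noteq> 0" using nz unfolding is_zero_fun_def by blast
  then obtain L where L: "L-lipschitz_on UNIV g0" unfolding Lip0_def by blast
  have L0: "L \<ge> 0" using L lipschitz_on_nonneg by blast
  define N where "N = norm (gamma g0)"
  have N0: "N > 0" using g0(2) by (simp add: N_def)
  have "(\<lambda>n. norm (M n g0)) \<longlonglongrightarrow> N" unfolding N_def by (rule tendsto_norm[OF conv[OF g0(1)]])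
  then have ev: "eventually (\<lambda>n. N / 2 < norm (M n g0)) sequentially"
    using order_tendstoD(1)[of _ N sequentially "N/2"] N0 by simp
  have bnd: "norm (M n g0) \<le> L * dist (a n) (b n) / d n" for n
  proof -
    have "norm (M n g0) = norm (g0 (a n) - g0 (b n)) / d n"
      using dpos[of n] by (simp add: Mdef norm_divide)
    also have "\<dots> \<le> L * dist (a n) (b n) / d n"
      using lipschitz_onD[OF L, of "a n" "b n"] dpos[of n] by (simp add: dist_norm divide_right_mono)
    finally show ?thesis .
  qed
  define c where "c = N / (2 * (L + 1))"
  have c0: "c > 0" using N0 L0 by (simp add: c_def)
  have "eventually (\<lambda>n. c * d n < dist (a n) (b n)) sequentially"
    using ev
  proof (rule eventually_mono)
    fix n assume n: "N / 2 < norm (M n g0)"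
    define \<rho> where "\<rho> = dist (a n) (b n)"
    have dn: "d n > 0" by (rule dpos)
    have "N / 2 < L * \<rho> / d n" using n bnd[of n] unfolding \<rho>_def by linarith
    then have h1: "N / 2 * d n < L * \<rho>" using dn by (simp add: less_divide_eq)
    have r0: "\<rho> \<ge> 0" by (simp add: \<rho>_def)
    have "L * \<rho> \<le> (L + 1) * \<rho>" using r0 by (simp add: algebra_simps)
    with h1 have h2: "N * d n < 2 * ((L + 1) * \<rho>)" by linarith
    have e2: "\<rho> * (2 * (L + 1)) = 2 * ((L + 1) * \<rho>)" by (simp add: algebra_simps)
    have p2: "0 < 2 * (L + 1)" using L0 by simp
    have "c * d n = N * d n / (2 * (L + 1))" by (simp add: c_def)
    also have "\<dots> < \<rho>" unfolding pos_divide_less_eq[OF p2] e2 by (rule h2)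
    finally show "c * d n < dist (a n) (b n)" by (simp add: \<rho>_def)
  qed
  with c0 show ?thesis by blast
qed

lemma P1:
  fixes a b :: "nat \<Rightarrow> 'b::complete_space" and d :: "nat \<Rightarrow> real" and z :: 'b
    and gamma :: "('b \<Rightarrow> 'k::real_normed_field) \<Rightarrow> 'k" and M :: "nat \<Rightarrow> ('b \<Rightarrow> 'k) \<Rightarrow> 'k"
  assumes dpos: "\<And>n. 0 < d n"
    and Mdef: "\<And>n g. M n g = (g (a n) - g (b n)) / of_real (d n)"
    and conv: "\<And>g. g \<in> Lip0 z \<Longrightarrow> (\<lambda>n. M n g) \<longlonglongrightarrow> gamma g"
    and gin: "gamma \<in> free_space z"
    and lim0: "(\<lambda>n. dist (a n) (b n)) \<longlonglongrightarrow> 0"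
  shows "is_zero_fun z gamma"
proof (rule ccontr)
  assume nz: "\<not> is_zero_fun z gamma"
  obtain c where c: "c > 0" "eventually (\<lambda>n. c * d n < dist (a n) (b n)) sequentially"
    using ratio_bound[OF dpos Mdef conv nz] by blast
  have c8: "c / 8 > 0" using c(1) by simp
  obtain S cc where S: "finite S" and dn: "dual_norm_le z (\<lambda>g. (\<Sum>x\<in>S. cc x * delta x g) - gamma g) (c / 8)"
    using approx_data[OF gin c8] by blast
  have pos: "eventually (\<lambda>n. 0 < dist (a n) (b n)) sequentially"
    using c(2)
  proof (rule eventually_mono)
    fix n assume "c * d n < dist (a n) (b n)"
    moreover have "0 < c * d n" using c(1) dpos[of n] by simp
    ultimately show "0 < dist (a n) (b n)" by linarith
  qed
  have fin: "finite (insert z S)" using S by simp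
  obtain Z where Z: "insert z S \<subseteq> Z"
    "frequently (\<lambda>n. dist (a n) (b n) / 4 \<le> \<bar>infdist (a n) Z - infdist (b n) Z\<bar>) sequentially"
    using G1[OF fin pos lim0] by blast
  define H where "H = (Hf Z :: 'b \<Rightarrow> 'k)"
  have HL: "H \<in> Lip0 z" unfolding H_def by (rule Hf_Lip0) (use Z(1) in blast)
  have H1: "1-lipschitz_on UNIV H" unfolding H_def by (rule Hf_lip)
  have phi0: "(\<Sum>x\<in>S. cc x * delta x H) = 0"
  proof (rule sum.neutral, rule ballI)
    fix x assume "x \<in> S"
    then have "x \<in> Z" using Z(1) by blast
    then show "cc x * delta x H = 0" by (simp add: delta_def H_def Hf_def)
  qed
  have up: "norm (gamma H) \<le> c / 8" using dnD[OF dn HL H1] phi0 by simp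
  have "frequently (\<lambda>n. c / 4 \<le> norm (M n H)) sequentially"
    using frequently_eventually_frequently[OF Z(2) c(2)]
  proof (rule frequently_elim1)
    fix n assume n: "dist (a n) (b n) / 4 \<le> \<bar>infdist (a n) Z - infdist (b n) Z\<bar> \<and> c * d n < dist (a n) (b n)"
    have dn: "d n > 0" by (rule dpos)
    have "M n H = of_real ((infdist (a n) Z - infdist (b n) Z) / d n)"
      unfolding Mdef H_def Hf_def by simp
    then have "norm (M n H) = \<bar>(infdist (a n) Z - infdist (b n) Z) / d n\<bar>"
      by (simp only: norm_of_real)
    also have "\<dots> = \<bar>infdist (a n) Z - infdist (b n) Z\<bar> / d n"
      using dn by (simp add: abs_divide)
    finally have "norm (M n H) = \<bar>infdist (a n) Z - infdist (b n) Z\<bar> / d n" .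
    moreover have "c * d n / 4 \<le> \<bar>infdist (a n) Z - infdist (b n) Z\<bar>" using n by linarith
    ultimately show "c / 4 \<le> norm (M n H)" using dn by (simp add: le_divide_eq)
  qed
  then have "c / 4 \<le> norm (gamma H)" by (rule norm_lim_ge_freq[OF conv[OF HL]])
  with up c(1) show False by simp
qed


lemma div_bound_neg:
  fixes D c d x :: real
  assumes "x \<le> - c" "0 \<le> c" "0 < d" "d \<le> D"
  shows "x / d \<le> - c / D"
proof -
  have "x / d \<le> (- c) / d" using divide_right_mono[of x "- c" d] assms by simp
  moreover have "c / D \<le> c / d" using assms by (intro divide_left_mono) auto
  ultimately show ?thesis by simp
qed

lemma div_bound_pos:
  fixes D c d x :: real
  assumes "c \<le> x" "0 \<le> c" "0 < d" "d \<le> D"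
  shows "c / D \<le> x / d"
proof -
  have "c / d \<le> x / d" using assms by (simp add: divide_right_mono)
  moreover have "c / D \<le> c / d" using assms by (intro divide_left_mono) auto
  ultimately show ?thesis by simp
qed

lemma sep_finite:
  fixes c :: "nat \<Rightarrow> 'b::metric_space"
  assumes "\<And>i j. i \<noteq> j \<Longrightarrow> e \<le> dist (c i) (c j)"
  shows "finite {n. \<not> e / 2 \<le> dist (c n) x}"
proof (rule subsingleton_finite)
  fix n m assume n: "n \<in> {n. \<not> e / 2 \<le> dist (c n) x}" and m: "m \<in> {n. \<not> e / 2 \<le> dist (c n) x}"
  show "n = m"
  proof (rule ccontr)
    assume "n \<noteq> m"
    then have "e \<le> dist (c n) (c m)" by (rule assms)
    moreover have "dist (c n) (c m) \<le> dist (c n) x + dist (c m) x"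
      using dist_triangle[where x="c n" and y=x and z="c m"] dist_commute[of x "c m"] by linarith
    ultimately show False using n m by simp
  qed
qed

lemma sep_ev:
  fixes c :: "nat \<Rightarrow> 'b::metric_space"
  assumes "\<And>i j. i \<noteq> j \<Longrightarrow> e \<le> dist (c i) (c j)"
  shows "eventually (\<lambda>n. e / 2 \<le> dist (c n) x) sequentially"
  by (rule finite_compl_ev, rule sep_finite[OF assms])

lemma freq_even: "(\<And>k. P (2 * k)) \<Longrightarrow> frequently P sequentially"
  unfolding frequently_sequentially by (metis le_add2 mult_2)

lemma freq_odd: "eventually E sequentially \<Longrightarrow> (\<And>k. E (2 * k + 1) \<Longrightarrow> P (2 * k + 1)) \<Longrightarrow> frequently P sequentially"
proof -
  assume ev: "eventually E sequentially" and h: "\<And>k. E (2 * k + 1) \<Longrightarrow> P (2 * k + 1)"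
  obtain N0 where N0: "\<And>n. n \<ge> N0 \<Longrightarrow> E n" using ev unfolding eventually_sequentially by blast
  show ?thesis unfolding frequently_sequentially
  proof
    fix N show "\<exists>n\<ge>N. P n"
      using h[of "N + N0"] N0[of "2 * (N + N0) + 1"] by (intro exI[of _ "2 * (N + N0) + 1"]) simp
  qed
qed

lemma nc_sub:
  assumes "\<not> (\<exists>\<sigma> l. strict_mono (\<sigma>::nat\<Rightarrow>nat) \<and> (w \<circ> \<sigma>) \<longlonglongrightarrow> l)" "strict_mono (\<tau>::nat\<Rightarrow>nat)"
  shows "\<not> (\<exists>\<sigma> l. strict_mono (\<sigma>::nat\<Rightarrow>nat) \<and> ((w \<circ> \<tau>) \<circ> \<sigma>) \<longlonglongrightarrow> l)"
proof
  assume "\<exists>\<sigma> l. strict_mono (\<sigma>::nat\<Rightarrow>nat) \<and> ((w \<circ> \<tau>) \<circ> \<sigma>) \<longlonglongrightarrow> l"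
  then obtain \<sigma> l where "strict_mono (\<sigma>::nat\<Rightarrow>nat)" "((w \<circ> \<tau>) \<circ> \<sigma>) \<longlonglongrightarrow> l" by blast
  then have "strict_mono (\<tau> \<circ> \<sigma>)" "(w \<circ> (\<tau> \<circ> \<sigma>)) \<longlonglongrightarrow> l" using assms(2) strict_mono_o by (auto simp: o_assoc)
  with assms(1) show False by blast
qed

lemma G3A:
  fixes a b :: "nat \<Rightarrow> 'b::complete_space" and d :: "nat \<Rightarrow> real" and z :: 'b
  assumes dpos: "\<And>n. 0 < d n" and dD: "\<And>n. d n \<le> D"
    and nc: "\<not> (\<exists>\<sigma> l. strict_mono (\<sigma>::nat\<Rightarrow>nat) \<and> ((\<lambda>n. (a n, b n)) \<circ> \<sigma>) \<longlonglongrightarrow> l)"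
    and s0: "strict_mono (\<sigma>0::nat\<Rightarrow>nat)" and ap: "(a \<circ> \<sigma>0) \<longlonglongrightarrow> p"
  shows "\<exists>Z. z \<in> Z \<and> \<not> convergent (\<lambda>n. (infdist (a n) Z - infdist (b n) Z) / d n)"
proof -
  have ncb: "\<not> (\<exists>\<sigma> l. strict_mono (\<sigma>::nat\<Rightarrow>nat) \<and> ((b \<circ> \<sigma>0) \<circ> \<sigma>) \<longlonglongrightarrow> l)"
  proof
    assume "\<exists>\<sigma> l. strict_mono (\<sigma>::nat\<Rightarrow>nat) \<and> ((b \<circ> \<sigma>0) \<circ> \<sigma>) \<longlonglongrightarrow> l"
    then obtain \<sigma> q where s: "strict_mono (\<sigma>::nat\<Rightarrow>nat)" and q: "((b \<circ> \<sigma>0) \<circ> \<sigma>) \<longlonglongrightarrow> q" by blast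
    have "((a \<circ> \<sigma>0) \<circ> \<sigma>) \<longlonglongrightarrow> p" using LIMSEQ_subseq_LIMSEQ[OF ap s] .
    then have "(\<lambda>n. (((a \<circ> \<sigma>0) \<circ> \<sigma>) n, ((b \<circ> \<sigma>0) \<circ> \<sigma>) n)) \<longlonglongrightarrow> (p, q)"
      using q by (rule tendsto_Pair)
    then have "((\<lambda>n. (a n, b n)) \<circ> (\<sigma>0 \<circ> \<sigma>)) \<longlonglongrightarrow> (p, q)" by (simp add: o_def)
    moreover have "strict_mono (\<sigma>0 \<circ> \<sigma>)" using s0 s by (rule strict_mono_o)
    ultimately show False using nc by blast
  qed
  obtain \<eta> \<sigma>1 where \<eta>: "\<eta> > 0" and s1: "strict_mono (\<sigma>1::nat\<Rightarrow>nat)"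
    and sep: "\<forall>i j. i \<noteq> j \<longrightarrow> \<eta> \<le> dist ((b \<circ> \<sigma>0) (\<sigma>1 i)) ((b \<circ> \<sigma>0) (\<sigma>1 j))"
    using separated_subseq[OF ncb] by (elim exE conjE) blast
  define \<tau> where "\<tau> = \<sigma>0 \<circ> \<sigma>1"
  have st: "strict_mono \<tau>" unfolding \<tau>_def using s0 s1 by (rule strict_mono_o)
  define a' where "a' = a \<circ> \<tau>"
  define b' where "b' = b \<circ> \<tau>"
  have sep': "\<eta> \<le> dist (b' i) (b' j)" if "i \<noteq> j" for i j
    using sep that unfolding b'_def \<tau>_def by simp
  have a'lim: "a' \<longlonglongrightarrow> p" unfolding a'_def \<tau>_def o_assoc by (rule LIMSEQ_subseq_LIMSEQ[OF ap s1])
  have talim: "(\<lambda>n. dist (a' n) p) \<longlonglongrightarrow> 0"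
    using tendsto_dist[OF a'lim tendsto_const[of p]] by simp
  define Z where "Z = {z, p} \<union> range (\<lambda>k. b' (2 * k))"
  define q where "q n = (infdist (a n) Z - infdist (b n) Z) / d n" for n
  have D0: "0 < D" using dpos[of 0] dD[of 0] by linarith
  have f1: "frequently (\<lambda>n. 0 \<le> (q \<circ> \<tau>) n) sequentially"
  proof (rule freq_even)
    fix k :: nat
    have "infdist (b' (2 * k)) Z = 0" unfolding Z_def by simp
    then show "0 \<le> (q \<circ> \<tau>) (2 * k)"
      using dpos[of "\<tau> (2 * k)"] unfolding q_def by (simp add: a'_def b'_def infdist_nonneg)
  qed
  define E where "E n = (dist (a' n) p \<le> \<eta> / 4 \<and> \<eta> / 2 \<le> dist (b' n) z \<and> \<eta> / 2 \<le> dist (b' n) p)" for n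
  have evE: "eventually E sequentially"
  proof -
    have e1: "eventually (\<lambda>n. dist (a' n) p < \<eta> / 4) sequentially"
      using order_tendstoD(2)[OF talim, of "\<eta> / 4"] \<eta> by simp
    have e2: "eventually (\<lambda>n. \<eta> / 2 \<le> dist (b' n) z) sequentially" by (rule sep_ev[OF sep'])
    have e3: "eventually (\<lambda>n. \<eta> / 2 \<le> dist (b' n) p) sequentially" by (rule sep_ev[OF sep'])
    have "eventually (\<lambda>n. dist (a' n) p < \<eta> / 4 \<and> \<eta> / 2 \<le> dist (b' n) z \<and> \<eta> / 2 \<le> dist (b' n) p) sequentially"
      using eventually_conj[OF e1 eventually_conj[OF e2 e3]] .
    then show ?thesis unfolding E_def[abs_def] by (rule eventually_mono) simp
  qed
  have f2: "frequently (\<lambda>n. (q \<circ> \<tau>) n \<le> - (\<eta> / 4) / D) sequentially"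
    using evE
  proof (rule freq_odd)
    fix k assume En: "E (2 * k + 1)"
    define n where "n = 2 * k + 1"
    have En': "E n" using En by (simp add: n_def)
    have bge: "\<eta> / 2 \<le> infdist (b' n) Z"
    proof (rule infdist_ge)
      show "Z \<noteq> {}" unfolding Z_def by blast
      fix y assume "y \<in> Z"
      then consider "y = z" | "y = p" | j where "y = b' (2 * j)" unfolding Z_def by blast
      then show "\<eta> / 2 \<le> dist (b' n) y"
      proof cases
        case 3
        have "2 * j \<noteq> n" unfolding n_def by presburger
        then have "\<eta> \<le> dist (b' n) (b' (2 * j))" by (intro sep') auto
        then show ?thesis using 3 \<eta> by simp
      qed (use En' in \<open>auto simp: E_def\<close>)
    qed
    have ale: "infdist (a' n) Z \<le> \<eta> / 4"
    proof -
      have "infdist (a' n) Z \<le> dist (a' n) p" by (rule infdist_le) (simp add: Z_def)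
      then show ?thesis using En' unfolding E_def by linarith
    qed
    have "(q \<circ> \<tau>) n = (infdist (a' n) Z - infdist (b' n) Z) / d (\<tau> n)"
      unfolding q_def a'_def b'_def by simp
    also have "\<dots> \<le> - (\<eta> / 4) / D"
      by (rule div_bound_neg) (use bge ale \<eta> dpos dD in auto)
    finally show "(q \<circ> \<tau>) (2 * k + 1) \<le> - (\<eta> / 4) / D" by (simp add: n_def)
  qed
  have "- (\<eta> / 4) / D < 0" using \<eta> D0 by (simp add: divide_neg_pos)
  then have "\<not> convergent (q \<circ> \<tau>)" by (intro not_conv_freq[OF f2 f1])
  then have "\<not> convergent q" using convergent_subseq_convergent st by blast
  moreover have "z \<in> Z" unfolding Z_def by blast
  ultimately show ?thesis unfolding q_def[abs_def] by blast
qed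


lemma G3B:
  fixes a b :: "nat \<Rightarrow> 'b::complete_space" and d :: "nat \<Rightarrow> real" and z :: 'b
  assumes dpos: "\<And>n. 0 < d n" and dD: "\<And>n. d n \<le> D"
    and r0: "\<rho>0 > 0" and evr: "eventually (\<lambda>n. \<rho>0 \<le> dist (a n) (b n)) sequentially"
    and na: "\<not> (\<exists>\<sigma> l. strict_mono (\<sigma>::nat\<Rightarrow>nat) \<and> (a \<circ> \<sigma>) \<longlonglongrightarrow> l)"
    and nb: "\<not> (\<exists>\<sigma> l. strict_mono (\<sigma>::nat\<Rightarrow>nat) \<and> (b \<circ> \<sigma>) \<longlonglongrightarrow> l)"
  shows "\<exists>Z. z \<in> Z \<and> \<not> convergent (\<lambda>n. (infdist (a n) Z - infdist (b n) Z) / d n)"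
proof -
  obtain e1 \<sigma>0 where e1: "e1 > 0" and s0: "strict_mono (\<sigma>0::nat\<Rightarrow>nat)"
    and sepa: "\<forall>i j. i \<noteq> j \<longrightarrow> e1 \<le> dist (a (\<sigma>0 i)) (a (\<sigma>0 j))"
    using separated_subseq[OF na] by (elim exE conjE) blast
  have nb': "\<not> (\<exists>\<sigma> l. strict_mono (\<sigma>::nat\<Rightarrow>nat) \<and> ((b \<circ> \<sigma>0) \<circ> \<sigma>) \<longlonglongrightarrow> l)"
    by (rule nc_sub[OF nb s0])
  obtain e2 \<sigma>1 where e2: "e2 > 0" and s1: "strict_mono (\<sigma>1::nat\<Rightarrow>nat)"
    and sepb: "\<forall>i j. i \<noteq> j \<longrightarrow> e2 \<le> dist ((b \<circ> \<sigma>0) (\<sigma>1 i)) ((b \<circ> \<sigma>0) (\<sigma>1 j))"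
    using separated_subseq[OF nb'] by (elim exE conjE) blast
  define \<tau> where "\<tau> = \<sigma>0 \<circ> \<sigma>1"
  have st: "strict_mono \<tau>" unfolding \<tau>_def using s0 s1 by (rule strict_mono_o)
  define a' where "a' = a \<circ> \<tau>"
  define b' where "b' = b \<circ> \<tau>"
  define \<eta> where "\<eta> = min e1 e2"
  have \<eta>0: "\<eta> > 0" using e1 e2 by (simp add: \<eta>_def)
  have sepA: "\<eta> \<le> dist (a' i) (a' j)" if "i \<noteq> j" for i j
  proof -
    have "\<sigma>1 i \<noteq> \<sigma>1 j" using that strict_mono_eq[OF s1] by blast
    then have "e1 \<le> dist (a' i) (a' j)" using sepa unfolding a'_def \<tau>_def by simp
    then show ?thesis unfolding \<eta>_def by linarith
  qed
  have sepB: "\<eta> \<le> dist (b' i) (b' j)" if "i \<noteq> j" for i j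
  proof -
    have "e2 \<le> dist (b' i) (b' j)" using sepb that unfolding b'_def \<tau>_def by simp
    then show ?thesis unfolding \<eta>_def by linarith
  qed
  define P0 where "P0 i j = (\<eta> / 2 \<le> dist (b' j) (a' i) \<and> \<eta> / 2 \<le> dist (a' j) (b' i))" for i j
  have finP: "finite {j. \<not> P0 i j}" for i
  proof -
    have "{j. \<not> P0 i j} \<subseteq> {j. \<not> \<eta> / 2 \<le> dist (b' j) (a' i)} \<union> {j. \<not> \<eta> / 2 \<le> dist (a' j) (b' i)}"
      unfolding P0_def by blast
    moreover have "finite ({j. \<not> \<eta> / 2 \<le> dist (b' j) (a' i)} \<union> {j. \<not> \<eta> / 2 \<le> dist (a' j) (b' i)})"
      using sep_finite[where c=b' and e=\<eta>, OF sepB] sep_finite[where c=a' and e=\<eta>, OF sepA] by blast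
    ultimately show ?thesis by (rule finite_subset)
  qed
  define Q where "Q n = (\<rho>0 \<le> dist (a' n) (b' n) \<and> \<eta> / 2 \<le> dist (a' n) z \<and> \<eta> / 2 \<le> dist (b' n) z)" for n
  have evQ: "eventually Q sequentially"
  proof -
    have e0: "eventually (\<lambda>n. \<rho>0 \<le> dist (a' n) (b' n)) sequentially"
      unfolding a'_def b'_def o_def by (rule eventually_subseq[OF st evr])
    have "eventually (\<lambda>n. \<rho>0 \<le> dist (a' n) (b' n) \<and> \<eta> / 2 \<le> dist (a' n) z \<and> \<eta> / 2 \<le> dist (b' n) z) sequentially"
      using eventually_conj[OF e0 eventually_conj[OF sep_ev[where c=a' and e=\<eta>, OF sepA] sep_ev[where c=b' and e=\<eta>, OF sepB]]] .
    then show ?thesis unfolding Q_def[abs_def] .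
  qed
  obtain \<sigma> :: "nat \<Rightarrow> nat" where s: "strict_mono \<sigma>" "\<forall>n. Q (\<sigma> n)" "\<forall>i j. i < j \<longrightarrow> P0 (\<sigma> i) (\<sigma> j)"
    using greedy_pairwise[of P0 Q, OF finP evQ] by (elim exE conjE) blast
  define A where "A k = a' (\<sigma> k)" for k
  define B where "B k = b' (\<sigma> k)" for k
  have cross: "\<eta> / 2 \<le> dist (A i) (B j)" if "i \<noteq> j" for i j
  proof (cases "i < j")
    case True
    then have "P0 (\<sigma> i) (\<sigma> j)" using s(3) by blast
    then show ?thesis unfolding P0_def A_def B_def by (simp add: dist_commute)
  next
    case False
    then have "j < i" using that by linarith
    then have "P0 (\<sigma> j) (\<sigma> i)" using s(3) by blast
    then show ?thesis unfolding P0_def A_def B_def by simp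
  qed
  have sepA2: "\<eta> \<le> dist (A i) (A j)" if "i \<noteq> j" for i j
    unfolding A_def by (rule sepA) (use that strict_mono_eq[OF s(1)] in blast)
  have sepB2: "\<eta> \<le> dist (B i) (B j)" if "i \<noteq> j" for i j
    unfolding B_def by (rule sepB) (use that strict_mono_eq[OF s(1)] in blast)
  have QA: "\<rho>0 \<le> dist (A k) (B k)" "\<eta> / 2 \<le> dist (A k) z" "\<eta> / 2 \<le> dist (B k) z" for k
    using s(2) unfolding Q_def A_def B_def by auto
  define Z where "Z = {z} \<union> range (\<lambda>k. A (2 * k)) \<union> range (\<lambda>k. B (2 * k + 1))"
  define \<beta> where "\<beta> = min (\<eta> / 2) \<rho>0"
  have \<beta>0: "\<beta> > 0" using \<eta>0 r0 by (simp add: \<beta>_def)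
  have Zne: "Z \<noteq> {}" unfolding Z_def by blast
  define q where "q n = (infdist (a n) Z - infdist (b n) Z) / d n" for n
  define mu where "mu = \<tau> \<circ> \<sigma>"
  have sm: "strict_mono mu" unfolding mu_def using st s(1) by (rule strict_mono_o)
  have qmu: "(q \<circ> mu) n = (infdist (A n) Z - infdist (B n) Z) / d (mu n)" for n
    unfolding q_def mu_def A_def B_def a'_def b'_def by simp
  have f1: "frequently (\<lambda>n. (q \<circ> mu) n \<le> - \<beta> / D) sequentially"
  proof (rule freq_even)
    fix k :: nat
    define n where "n = 2 * k"
    have a0: "infdist (A n) Z = 0" unfolding Z_def n_def by simp
    have bge: "\<beta> \<le> infdist (B n) Z"
    proof (rule infdist_ge[OF Zne])
      fix y assume "y \<in> Z"
      then consider "y = z" | j where "y = A (2 * j)" | j where "y = B (2 * j + 1)" unfolding Z_def by blast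
      then show "\<beta> \<le> dist (B n) y"
      proof cases
        case 1 then show ?thesis using QA(3)[of n] unfolding \<beta>_def by simp
      next
        case 2
        show ?thesis
        proof (cases "2 * j = n")
          case True then show ?thesis using 2 QA(1)[of n] unfolding \<beta>_def by (simp add: dist_commute)
        next
          case False then show ?thesis using 2 cross[of "2 * j" n] unfolding \<beta>_def by (simp add: dist_commute)
        qed
      next
        case 3
        have "2 * j + 1 \<noteq> n" unfolding n_def by presburger
        then have "\<eta> \<le> dist (B n) (B (2 * j + 1))" by (intro sepB2) auto
        then show ?thesis using 3 \<eta>0 unfolding \<beta>_def by simp
      qed
    qed
    have "(q \<circ> mu) n \<le> - \<beta> / D" unfolding qmu
      by (rule div_bound_neg) (use a0 bge \<beta>0 dpos dD in auto)
    then show "(q \<circ> mu) (2 * k) \<le> - \<beta> / D" by (simp add: n_def)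
  qed
  have f2: "frequently (\<lambda>n. \<beta> / D \<le> (q \<circ> mu) n) sequentially"
  proof (rule freq_odd[where E = "\<lambda>_. True"])
    fix k :: nat
    define n where "n = 2 * k + 1"
    have b0: "infdist (B n) Z = 0" unfolding Z_def n_def by simp
    have age: "\<beta> \<le> infdist (A n) Z"
    proof (rule infdist_ge[OF Zne])
      fix y assume "y \<in> Z"
      then consider "y = z" | j where "y = A (2 * j)" | j where "y = B (2 * j + 1)" unfolding Z_def by blast
      then show "\<beta> \<le> dist (A n) y"
      proof cases
        case 1 then show ?thesis using QA(2)[of n] unfolding \<beta>_def by simp
      next
        case 2
        have "2 * j \<noteq> n" unfolding n_def by presburger
        then have "\<eta> \<le> dist (A n) (A (2 * j))" by (intro sepA2) auto
        then show ?thesis using 2 \<eta>0 unfolding \<beta>_def by simp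
      next
        case 3
        show ?thesis
        proof (cases "2 * j + 1 = n")
          case True then show ?thesis using 3 QA(1)[of n] unfolding \<beta>_def by simp
        next
          case False then show ?thesis using 3 cross[of n "2 * j + 1"] unfolding \<beta>_def by simp
        qed
      qed
    qed
    have "\<beta> / D \<le> (q \<circ> mu) n" unfolding qmu
      by (rule div_bound_pos) (use b0 age \<beta>0 dpos dD in auto)
    then show "\<beta> / D \<le> (q \<circ> mu) (2 * k + 1)" by (simp add: n_def)
  qed simp
  have D0: "0 < D" using dpos[of 0] dD[of 0] by linarith
  have "- \<beta> / D < \<beta> / D" using \<beta>0 D0 by (simp add: divide_strict_right_mono)
  then have "\<not> convergent (q \<circ> mu)" by (intro not_conv_freq[OF f1 f2])
  then have "\<not> convergent q" using convergent_subseq_convergent sm by blast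
  moreover have "z \<in> Z" unfolding Z_def by blast
  ultimately show ?thesis unfolding q_def[abs_def] by blast
qed




lemma G3:
  fixes a b :: "nat \<Rightarrow> 'b::complete_space" and d :: "nat \<Rightarrow> real" and z :: 'b
  assumes dpos: "\<And>n. 0 < d n" and dD: "\<And>n. d n \<le> D"
    and r0: "\<rho>0 > 0" and evr: "eventually (\<lambda>n. \<rho>0 \<le> dist (a n) (b n)) sequentially"
    and nc: "\<not> (\<exists>\<sigma> l. strict_mono (\<sigma>::nat\<Rightarrow>nat) \<and> ((\<lambda>n. (a n, b n)) \<circ> \<sigma>) \<longlonglongrightarrow> l)"
  shows "\<exists>Z. z \<in> Z \<and> \<not> convergent (\<lambda>n. (infdist (a n) Z - infdist (b n) Z) / d n)"
proof (cases "\<exists>\<sigma> l. strict_mono (\<sigma>::nat\<Rightarrow>nat) \<and> (a \<circ> \<sigma>) \<longlonglongrightarrow> l")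
  case True
  then obtain \<sigma> l where s: "strict_mono (\<sigma>::nat\<Rightarrow>nat)" "(a \<circ> \<sigma>) \<longlonglongrightarrow> l" by blast
  show ?thesis by (rule G3A[where a=a and b=b and d=d and D=D and z=z, OF dpos dD nc s(1) s(2)])
next
  case na: False
  show ?thesis
  proof (cases "\<exists>\<sigma> l. strict_mono (\<sigma>::nat\<Rightarrow>nat) \<and> (b \<circ> \<sigma>) \<longlonglongrightarrow> l")
    case True
    then obtain \<sigma> l where s: "strict_mono (\<sigma>::nat\<Rightarrow>nat)" "(b \<circ> \<sigma>) \<longlonglongrightarrow> l" by blast
    have nc': "\<not> (\<exists>\<sigma> l. strict_mono (\<sigma>::nat\<Rightarrow>nat) \<and> ((\<lambda>n. (b n, a n)) \<circ> \<sigma>) \<longlonglongrightarrow> l)"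
    proof
      assume "\<exists>\<sigma> l. strict_mono (\<sigma>::nat\<Rightarrow>nat) \<and> ((\<lambda>n. (b n, a n)) \<circ> \<sigma>) \<longlonglongrightarrow> l"
      then obtain \<sigma>' l' where s': "strict_mono (\<sigma>'::nat\<Rightarrow>nat)" "((\<lambda>n. (b n, a n)) \<circ> \<sigma>') \<longlonglongrightarrow> l'" by blast
      have "(\<lambda>n. (snd (((\<lambda>n. (b n, a n)) \<circ> \<sigma>') n), fst (((\<lambda>n. (b n, a n)) \<circ> \<sigma>') n))) \<longlonglongrightarrow> (snd l', fst l')"
        by (rule tendsto_Pair[OF tendsto_snd[OF s'(2)] tendsto_fst[OF s'(2)]])
      then have "((\<lambda>n. (a n, b n)) \<circ> \<sigma>') \<longlonglongrightarrow> (snd l', fst l')" by (simp add: o_def)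
      with s'(1) nc show False by blast
    qed
    have evr': "eventually (\<lambda>n. \<rho>0 \<le> dist (b n) (a n)) sequentially"
      using evr by (simp add: dist_commute)
    obtain Z where Z: "z \<in> Z" "\<not> convergent (\<lambda>n. (infdist (b n) Z - infdist (a n) Z) / d n)"
    proof -
      have "\<exists>Z. z \<in> Z \<and> \<not> convergent (\<lambda>n. (infdist (b n) Z - infdist (a n) Z) / d n)"
        by (rule G3A[where a=b and b=a and d=d and D=D and z=z, OF dpos dD nc' s(1) s(2)])
      then show ?thesis using that by blast
    qed
    have eq: "(\<lambda>n. (infdist (b n) Z - infdist (a n) Z) / d n) = (\<lambda>n. - ((infdist (a n) Z - infdist (b n) Z) / d n))"
      by (intro ext) (metis minus_diff_eq divide_minus_left)
    have "\<not> convergent (\<lambda>n. - ((infdist (a n) Z - infdist (b n) Z) / d n))"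
      using Z(2) unfolding eq .
    then have "\<not> convergent (\<lambda>n. (infdist (a n) Z - infdist (b n) Z) / d n)"
      using convergent_minus_iff[of "\<lambda>n. (infdist (a n) Z - infdist (b n) Z) / d n"] by blast
    with Z(1) show ?thesis by blast
  next
    case nb: False
    show ?thesis by (rule G3B[where a=a and b=b and d=d and D=D and z=z, OF dpos dD r0 evr na nb])
  qed
qed


lemma unbounded_freq:
  fixes d :: "nat \<Rightarrow> real"
  assumes dpos: "\<And>n. 0 < d n" and nb: "\<not> bounded (range d)"
  shows "frequently (\<lambda>n. B \<le> d n) sequentially"
proof (rule ccontr)
  assume "\<not> frequently (\<lambda>n. B \<le> d n) sequentially"
  then have "eventually (\<lambda>n. d n < B) sequentially"
    unfolding frequently_def by (simp add: not_le)
  then obtain N where N: "\<And>n. n \<ge> N \<Longrightarrow> d n < B" unfolding eventually_sequentially by blast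
  have "\<bar>d n\<bar> \<le> B + (\<Sum>i<N. d i)" for n
  proof (cases "n < N")
    case True
    have "d n \<le> (\<Sum>i<N. d i)" by (rule member_le_sum) (use True dpos less_imp_le in auto)
    moreover have "0 \<le> B" using N[of N] dpos[of N] by simp
    ultimately show ?thesis using dpos[of n] by simp
  next
    case False
    then have "d n < B" using N by simp
    moreover have "0 \<le> (\<Sum>i<N. d i)" using dpos by (simp add: sum_nonneg less_imp_le)
    ultimately show ?thesis using dpos[of n] by simp
  qed
  then have "bounded (range d)" unfolding bounded_real by blast
  with nb show False by simp
qed

theorem lemma2p3:
  fixes f :: "'a::complete_space \<Rightarrow> 'b::complete_space"
    and zM :: 'a and zN :: 'b
    and x y :: "nat \<Rightarrow> 'a"
    and gamma :: "('b \<Rightarrow> 'k::real_normed_field) \<Rightarrow> 'k"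
    and m :: "nat \<Rightarrow> ('b \<Rightarrow> 'k) \<Rightarrow> 'k"
  assumes f_lip: "\<exists>C. C-lipschitz_on UNIV f"
    and f_base: "f zM = zN"
    and xy_ne: "\<And>n. x n \<noteq> y n"
    and m_def: "\<And>n. m n = (\<lambda>g. (delta (f (x n)) g - delta (f (y n)) g) / of_real (dist (x n) (y n)))"
    and gamma_in: "gamma \<in> free_space zN"
    and conv: "weak_conv zN m gamma"
  shows "((\<lambda>n. dist (x n) (y n)) \<longlonglongrightarrow> 0 \<longrightarrow> is_zero_fun zN gamma)
       \<and> (filterlim (\<lambda>n. dist (x n) (y n)) at_top sequentially \<longrightarrow> is_zero_fun zN gamma)
       \<and> ((\<exists>\<alpha>>0. \<forall>n. dist (x n) (y n) \<ge> \<alpha>) \<and> \<not> is_zero_fun zN gamma \<longrightarrow>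
            bounded (range (\<lambda>n. dist (x n) (y n))) \<and>
            (\<exists>p :: 'b \<times> 'b. \<forall>U. open U \<longrightarrow> p \<in> U \<longrightarrow>
                (\<exists>\<^sub>F n in sequentially. (f (x n), f (y n)) \<in> U)))"
proof -
  define a where "a n = f (x n)" for n
  define b where "b n = f (y n)" for n
  define d where "d n = dist (x n) (y n)" for n
  have dpos: "\<And>n. 0 < d n" using xy_ne by (simp add: d_def)
  have Mdef: "\<And>n g. m n g = (g (a n) - g (b n)) / of_real (d n)"
    by (simp add: m_def delta_def a_def b_def d_def)
  have cv: "\<And>g. g \<in> Lip0 zN \<Longrightarrow> (\<lambda>n. m n g) \<longlonglongrightarrow> gamma g"
    using conv unfolding weak_conv_def by blast
  obtain C where C: "C-lipschitz_on UNIV f" using f_lip by blast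
  have C0: "C \<ge> 0" using C lipschitz_on_nonneg by blast
  have rho_le: "dist (a n) (b n) \<le> C * d n" for n
    using lipschitz_onD[OF C, of "x n" "y n"] by (simp add: a_def b_def d_def)
  have part1: "is_zero_fun zN gamma" if d0: "(\<lambda>n. dist (x n) (y n)) \<longlonglongrightarrow> 0"
  proof -
    have l0: "(\<lambda>n. dist (a n) (b n)) \<longlonglongrightarrow> 0"
    proof (rule tendsto_sandwich[of "\<lambda>_. 0" _ _ "\<lambda>n. C * d n"])
      show "eventually (\<lambda>n. 0 \<le> dist (a n) (b n)) sequentially" by simp
      show "eventually (\<lambda>n. dist (a n) (b n) \<le> C * d n) sequentially" using rho_le by simp
      show "(\<lambda>n. C * d n) \<longlonglongrightarrow> 0" using tendsto_mult_right_zero[OF d0, of C] by (simp add: d_def)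
    qed simp
    show ?thesis by (rule P1[where a=a and b=b and d=d and z=zN and M=m and gamma=gamma, OF dpos Mdef cv gamma_in l0]) simp
  qed
  have part2: "is_zero_fun zN gamma" if "filterlim (\<lambda>n. dist (x n) (y n)) at_top sequentially"
  proof (rule P2[where a=a and b=b and d=d and z=zN and M=m and gamma=gamma, OF dpos Mdef cv gamma_in])
    show "\<And>g. g \<in> Lip0 zN \<Longrightarrow> g \<in> Lip0 zN" by simp
    fix B :: real
    have "eventually (\<lambda>n. B \<le> d n) sequentially" using that unfolding filterlim_at_top d_def by blast
    then show "frequently (\<lambda>n. B \<le> d n) sequentially" by (simp add: eventually_frequently)
  qed
  have part3: "bounded (range (\<lambda>n. dist (x n) (y n))) \<and>
            (\<exists>p :: 'b \<times> 'b. \<forall>U. open U \<longrightarrow> p \<in> U \<longrightarrow>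
                (\<exists>\<^sub>F n in sequentially. (f (x n), f (y n)) \<in> U))"
    if al: "\<exists>\<alpha>>0. \<forall>n. dist (x n) (y n) \<ge> \<alpha>" and nz: "\<not> is_zero_fun zN gamma"
  proof -
    obtain \<alpha> where \<alpha>: "\<alpha> > 0" "\<And>n. \<alpha> \<le> d n" using al unfolding d_def by blast
    have bd: "bounded (range d)"
    proof (rule ccontr)
      assume nbd: "\<not> bounded (range d)"
      have "is_zero_fun zN gamma"
        by (rule P2[where a=a and b=b and d=d and z=zN and M=m and gamma=gamma, OF dpos Mdef cv gamma_in unbounded_freq[OF dpos nbd]]) simp
      with nz show False by simp
    qed
    then obtain D0 where D0: "\<forall>x\<in>range d. \<bar>x\<bar> \<le> D0" unfolding bounded_real by blast
    have D: "d n \<le> D0" for n using D0 by (meson abs_ge_self order_trans rangeI)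
    obtain c where c: "c > 0" "eventually (\<lambda>n. c * d n < dist (a n) (b n)) sequentially"
      using ratio_bound[where a=a and b=b and d=d and z=zN and M=m and gamma=gamma, OF dpos Mdef cv nz] by blast
    have evr: "eventually (\<lambda>n. c * \<alpha> \<le> dist (a n) (b n)) sequentially"
      using c(2)
    proof (rule eventually_mono)
      fix n assume "c * d n < dist (a n) (b n)"
      moreover have "c * \<alpha> \<le> c * d n" using c(1) \<alpha>(2)[of n] by simp
      ultimately show "c * \<alpha> \<le> dist (a n) (b n)" by linarith
    qed
    have ca: "c * \<alpha> > 0" using c(1) \<alpha>(1) by simp
    have cl: "\<exists>p :: 'b \<times> 'b. \<forall>U. open U \<longrightarrow> p \<in> U \<longrightarrow> (\<exists>\<^sub>F n in sequentially. (f (x n), f (y n)) \<in> U)"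
    proof (rule ccontr)
      assume ncl: "\<not> (\<exists>p :: 'b \<times> 'b. \<forall>U. open U \<longrightarrow> p \<in> U \<longrightarrow> (\<exists>\<^sub>F n in sequentially. (f (x n), f (y n)) \<in> U))"
      have nc: "\<not> (\<exists>\<sigma> l. strict_mono (\<sigma>::nat\<Rightarrow>nat) \<and> ((\<lambda>n. (a n, b n)) \<circ> \<sigma>) \<longlonglongrightarrow> l)"
      proof
        assume "\<exists>\<sigma> l. strict_mono (\<sigma>::nat\<Rightarrow>nat) \<and> ((\<lambda>n. (a n, b n)) \<circ> \<sigma>) \<longlonglongrightarrow> l"
        then obtain \<sigma> l where s: "strict_mono (\<sigma>::nat\<Rightarrow>nat)" "((\<lambda>n. (a n, b n)) \<circ> \<sigma>) \<longlonglongrightarrow> l" by blast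
        have "\<forall>U. open U \<longrightarrow> l \<in> U \<longrightarrow> (\<exists>\<^sub>F n in sequentially. (f (x n), f (y n)) \<in> U)"
        proof (intro allI impI)
          fix U :: "('b \<times> 'b) set" assume "open U" "l \<in> U"
          from cluster_of_subseq[OF s(1) s(2) this] show "\<exists>\<^sub>F n in sequentially. (f (x n), f (y n)) \<in> U"
            by (simp add: a_def b_def)
        qed
        with ncl show False by blast
      qed
      obtain Z where Z: "zN \<in> Z" "\<not> convergent (\<lambda>n. (infdist (a n) Z - infdist (b n) Z) / d n)"
      proof -
        have "\<exists>Z. zN \<in> Z \<and> \<not> convergent (\<lambda>n. (infdist (a n) Z - infdist (b n) Z) / d n)"
          by (rule G3[where a=a and b=b and d=d and D=D0 and z=zN, OF dpos D ca evr nc])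
        then show ?thesis using that by blast
      qed
      define H where "H = (Hf Z :: 'b \<Rightarrow> 'k)"
      have HL: "H \<in> Lip0 zN" unfolding H_def by (rule Hf_Lip0[OF Z(1)])
      have "m n H = of_real ((infdist (a n) Z - infdist (b n) Z) / d n)" for n
        unfolding Mdef H_def Hf_def by simp
      then have "(\<lambda>n. of_real ((infdist (a n) Z - infdist (b n) Z) / d n) :: 'k) \<longlonglongrightarrow> gamma H"
        using cv[OF HL] by simp
      then have "convergent (\<lambda>n. (infdist (a n) Z - infdist (b n) Z) / d n)" by (rule of_real_conv)
      with Z(2) show False by simp
    qed
    have "bounded (range (\<lambda>n. dist (x n) (y n)))" using bd unfolding d_def[abs_def] .
    with cl show ?thesis by blast
  qed
  show ?thesis using part1 part2 part3 by blast
qed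


end
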